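(* Let $p\colon X\to B$ be a Boolean set. Let $X^{\ast}$ be the set of ultrafilters of $(X,\le)$, topologized by the basis of sets $L(a)=\{G\in X^{\ast}: a\in G\}$, $a\in X$, and let $B^{\ast}$ be the set of ultrafilters of $B$ with the Stone topology (basis $M(b)=\{F\in B^{\ast}: b\in F\}$, $b\in B$). Let $\widetilde p\colon X^{\ast}\to B^{\ast}$ be $G\mapsto p(G)$ (which is an ultrafilter of $B$). Then $\widetilde p\colon X^{\ast}\to B^{\ast}$ is an étalé space, i.e. $\widetilde p$ is a surjective local homeomorphism (and $B^{\ast}$ is a Boolean space).
   Context: Convention: a "Boolean algebra" means a generalized Boolean algebra (relatively complemented distributive lattice with $0$). Presheaf of sets over a meet semilattice $E$: pairwise disjoint sets $X_e$, restriction maps $x\mapsto x|^e_f$ for $e\ge f$ with $|^e_e=\mathrm{id}$ and $(x|^e_f)|^f_g=x|^e_g$; $p(x)=e$ iff $x\in X_e$; global support: all $X_e\neq\emptyset$. Order: $x\le y$ iff $p(x)\le p(y)$ and $x=y|^{p(y)}_{p(x)}$. Compatibility $x\sim y$: $x\wedge y$ exists and $p(x\wedge y)=p(x)\wedge p(y)$. A Boolean set is a presheaf $p\colon X\to B$ with global support over a Boolean algebra $B$ such that $(X,\le)$ has least element $0$, compatible pairs have joins, and $p(x)=0\Rightarrow x=0$. Filter: non-empty, down directed, upwardly closed subset; ultrafilter: maximal proper filter. An étalé space is a triple $(E,p,Y)$ with $p\colon E\to Y$ a surjective local homeomorphism; a Boolean space is a Hausdorff space with a basis of compact-open sets. *)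

theory Defs
  imports "HOL-Analysis.Analysis"
begin

definition gen_boolean_algebra :: "'b::{distrib_lattice,order_bot} itself \<Rightarrow> bool" where
  "gen_boolean_algebra _ \<longleftrightarrow>
     (\<forall>a b :: 'b. a \<le> b \<longrightarrow> (\<exists>c. inf a c = bot \<and> sup a c = b))"

text \<open>Presheaf of sets over the meet semilattice 'b: total space the type 'x, projection p,
  restriction r x f = x|^{p x}_f (only meaningful for f \<le> p x).\<close>
definition presheaf :: "('x \<Rightarrow> 'b::semilattice_inf) \<Rightarrow> ('x \<Rightarrow> 'b \<Rightarrow> 'x) \<Rightarrow> bool" where
  "presheaf p r \<longleftrightarrow>
     (\<forall>x f. f \<le> p x \<longrightarrow> p (r x f) = f) \<and>
     (\<forall>x. r x (p x) = x) \<and>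
     (\<forall>x f g. g \<le> f \<longrightarrow> f \<le> p x \<longrightarrow> r (r x f) g = r x g)"

definition global_support :: "('x \<Rightarrow> 'b) \<Rightarrow> bool" where
  "global_support p \<longleftrightarrow> (\<forall>e. \<exists>x. p x = e)"

definition pre_le :: "('x \<Rightarrow> 'b::order) \<Rightarrow> ('x \<Rightarrow> 'b \<Rightarrow> 'x) \<Rightarrow> 'x \<Rightarrow> 'x \<Rightarrow> bool" where
  "pre_le p r x y \<longleftrightarrow> p x \<le> p y \<and> x = r y (p x)"

definition is_meet_of :: "('a \<Rightarrow> 'a \<Rightarrow> bool) \<Rightarrow> 'a \<Rightarrow> 'a \<Rightarrow> 'a \<Rightarrow> bool" where
  "is_meet_of le x y z \<longleftrightarrow> le z x \<and> le z y \<and> (\<forall>w. le w x \<and> le w y \<longrightarrow> le w z)"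

definition is_join_of :: "('a \<Rightarrow> 'a \<Rightarrow> bool) \<Rightarrow> 'a \<Rightarrow> 'a \<Rightarrow> 'a \<Rightarrow> bool" where
  "is_join_of le x y z \<longleftrightarrow> le x z \<and> le y z \<and> (\<forall>w. le x w \<and> le y w \<longrightarrow> le z w)"

definition compatible :: "('x \<Rightarrow> 'b::semilattice_inf) \<Rightarrow> ('x \<Rightarrow> 'b \<Rightarrow> 'x) \<Rightarrow> 'x \<Rightarrow> 'x \<Rightarrow> bool" where
  "compatible p r x y \<longleftrightarrow> (\<exists>z. is_meet_of (pre_le p r) x y z \<and> p z = inf (p x) (p y))"

definition is_least :: "('a \<Rightarrow> 'a \<Rightarrow> bool) \<Rightarrow> 'a \<Rightarrow> bool" where
  "is_least le z \<longleftrightarrow> (\<forall>x. le z x)"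

definition boolean_set ::
  "('x \<Rightarrow> 'b::{distrib_lattice,order_bot}) \<Rightarrow> ('x \<Rightarrow> 'b \<Rightarrow> 'x) \<Rightarrow> bool" where
  "boolean_set p r \<longleftrightarrow>
     gen_boolean_algebra TYPE('b) \<and> presheaf p r \<and> global_support p \<and>
     (\<exists>z. is_least (pre_le p r) z) \<and>
     (\<forall>x y. compatible p r x y \<longrightarrow> (\<exists>j. is_join_of (pre_le p r) x y j)) \<and>
     (\<forall>x. p x = bot \<longrightarrow> is_least (pre_le p r) x)"

definition is_filter :: "('a \<Rightarrow> 'a \<Rightarrow> bool) \<Rightarrow> 'a set \<Rightarrow> bool" where
  "is_filter le F \<longleftrightarrow> F \<noteq> {} \<and>
     (\<forall>a\<in>F. \<forall>b\<in>F. \<exists>c\<in>F. le c a \<and> le c b) \<and>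
     (\<forall>a\<in>F. \<forall>b. le a b \<longrightarrow> b \<in> F)"

definition is_ultrafilter :: "('a \<Rightarrow> 'a \<Rightarrow> bool) \<Rightarrow> 'a set \<Rightarrow> bool" where
  "is_ultrafilter le F \<longleftrightarrow> is_filter le F \<and> F \<noteq> UNIV \<and>
     (\<forall>G. is_filter le G \<and> G \<noteq> UNIV \<and> F \<subseteq> G \<longrightarrow> G = F)"

definition ultrafilter_space :: "('a \<Rightarrow> 'a \<Rightarrow> bool) \<Rightarrow> 'a set topology" where
  "ultrafilter_space le =
     topology_generated_by {{G. is_ultrafilter le G \<and> a \<in> G} | a. True}"

definition local_homeomorphism :: "'a topology \<Rightarrow> 'b topology \<Rightarrow> ('a \<Rightarrow> 'b) \<Rightarrow> bool" where
  "local_homeomorphism X Y f \<longleftrightarrow> continuous_map X Y f \<and>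
     (\<forall>x\<in>topspace X. \<exists>U. openin X U \<and> x \<in> U \<and> openin Y (f ` U) \<and>
        homeomorphic_map (subtopology X U) (subtopology Y (f ` U)) f)"

definition etale_space :: "'a topology \<Rightarrow> ('a \<Rightarrow> 'b) \<Rightarrow> 'b topology \<Rightarrow> bool" where
  "etale_space E p Y \<longleftrightarrow> p ` topspace E = topspace Y \<and> local_homeomorphism E Y p"

definition boolean_space :: "'a topology \<Rightarrow> bool" where
  "boolean_space X \<longleftrightarrow> Hausdorff_space X \<and>
     (\<forall>U x. openin X U \<and> x \<in> U \<longrightarrow>
        (\<exists>K. openin X K \<and> compactin X K \<and> x \<in> K \<and> K \<subseteq> U))"

end

theory Submission
  imports Defs
begin

definition LL :: "('a \<Rightarrow> 'a \<Rightarrow> bool) \<Rightarrow> 'a \<Rightarrow> 'a set set" where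
  "LL R a = {G. is_ultrafilter R G \<and> a \<in> G}"

lemma uf_filter: "is_ultrafilter R G \<Longrightarrow> is_filter R G"
  by (simp add: is_ultrafilter_def)

lemma filter_up: "is_filter R F \<Longrightarrow> a \<in> F \<Longrightarrow> R a b \<Longrightarrow> b \<in> F"
  unfolding is_filter_def by blast

lemma filter_dir: "is_filter R F \<Longrightarrow> a \<in> F \<Longrightarrow> b \<in> F \<Longrightarrow> \<exists>c\<in>F. R c a \<and> R c b"
  unfolding is_filter_def by blast

lemma filter_ne: "is_filter R F \<Longrightarrow> \<exists>a. a \<in> F"
  unfolding is_filter_def by auto

lemma LL_mono: "R c a \<Longrightarrow> LL R c \<subseteq> LL R a"
proof
  fix G assume "R c a" "G \<in> LL R c"
  then show "G \<in> LL R a" unfolding LL_def using filter_up[OF uf_filter] by auto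
qed

lemma LL_int:
  assumes "G \<in> LL R a" "G \<in> LL R b"
  shows "\<exists>c\<in>G. LL R c \<subseteq> LL R a \<inter> LL R b"
proof -
  from assms have u: "is_ultrafilter R G" "a \<in> G" "b \<in> G" by (auto simp: LL_def)
  then obtain c where c: "c \<in> G" "R c a" "R c b"
    using filter_dir[OF uf_filter[OF u(1)] u(2) u(3)] by blast
  then show ?thesis using LL_mono[of R c a, OF c(2)] LL_mono[of R c b, OF c(3)] by blast
qed

lemma ufs_eq: "ultrafilter_space R = topology_generated_by {LL R a | a. True}"
  unfolding ultrafilter_space_def LL_def by simp

lemma openin_ufs:
  "openin (ultrafilter_space R) U \<longleftrightarrow> (\<forall>G\<in>U. \<exists>a\<in>G. G \<in> LL R a \<and> LL R a \<subseteq> U)"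
proof
  assume "openin (ultrafilter_space R) U"
  hence "generate_topology_on {LL R a | a. True} U"
    unfolding ufs_eq by (rule openin_topology_generated_by)
  then show "\<forall>G\<in>U. \<exists>a\<in>G. G \<in> LL R a \<and> LL R a \<subseteq> U"
  proof induction
    case (Int a b)
    show ?case
    proof
      fix G assume "G \<in> a \<inter> b"
      then obtain x y where "x \<in> G" "G \<in> LL R x" "LL R x \<subseteq> a" "y \<in> G" "G \<in> LL R y" "LL R y \<subseteq> b"
        using Int.IH by blast
      with LL_int[of G R x y] obtain c where "c \<in> G" "LL R c \<subseteq> a \<inter> b"
        by blast
      moreover have "G \<in> LL R c" using \<open>c \<in> G\<close> \<open>G \<in> LL R x\<close> by (auto simp: LL_def)
      ultimately show "\<exists>c\<in>G. G \<in> LL R c \<and> LL R c \<subseteq> a \<inter> b" by blast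
    qed
  next
    case (UN K) then show ?case by (meson UnionE UnionI subsetI subset_iff)
  next
    case (Basis s)
    then obtain a where s: "s = LL R a" by blast
    show ?case
    proof
      fix G assume "G \<in> s"
      then have "a \<in> G" "G \<in> LL R a" using s by (auto simp: LL_def)
      then show "\<exists>a\<in>G. G \<in> LL R a \<and> LL R a \<subseteq> s" using s by blast
    qed
  next
    case Empty show ?case by simp
  qed
next
  assume R: "\<forall>G\<in>U. \<exists>a\<in>G. G \<in> LL R a \<and> LL R a \<subseteq> U"
  have eq: "U = \<Union>{LL R a | a. LL R a \<subseteq> U}" using R by blast
  have "generate_topology_on {LL R a | a. True} (\<Union>{LL R a | a. LL R a \<subseteq> U})"
    by (rule generate_topology_on.UN) (auto intro: generate_topology_on.Basis)
  then show "openin (ultrafilter_space R) U"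
    unfolding ufs_eq openin_topology_generated_by_iff using eq by simp
qed

lemma topspace_ufs: "topspace (ultrafilter_space R) = {G. is_ultrafilter R G}"
  unfolding ufs_eq topology_generated_by_topspace
proof
  show "\<Union> {LL R a |a. True} \<subseteq> {G. is_ultrafilter R G}" by (auto simp: LL_def)
  show "{G. is_ultrafilter R G} \<subseteq> \<Union> {LL R a |a. True}"
  proof
    fix G assume "G \<in> {G. is_ultrafilter R G}"
    then have u: "is_ultrafilter R G" by simp
    then obtain a where "a \<in> G" using filter_ne[OF uf_filter[OF u]] by blast
    with u show "G \<in> \<Union> {LL R a |a. True}" by (auto simp: LL_def)
  qed
qed

lemma openin_LL: "openin (ultrafilter_space R) (LL R a)"
  unfolding openin_ufs by (auto simp: LL_def)


lemma filter_UNIV: "is_filter R F \<Longrightarrow> z \<in> F \<Longrightarrow> (\<And>y. R z y) \<Longrightarrow> F = UNIV"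
  using filter_up[of R F z] by auto

lemma bfilter_inf: "is_filter (\<le>) F \<Longrightarrow> a \<in> F \<Longrightarrow> b \<in> F \<Longrightarrow> inf a b \<in> (F::'b::lattice set)"
proof -
  assume f: "is_filter (\<le>) F" "a \<in> F" "b \<in> F"
  then obtain c where "c \<in> F" "c \<le> a" "c \<le> b" using filter_dir[of "(\<le>)" F a b] by blast
  then show ?thesis using filter_up[of "(\<le>)" F c "inf a b"] f by simp
qed

lemma bfilter_proper: "is_filter (\<le>) F \<Longrightarrow> F \<noteq> UNIV \<longleftrightarrow> bot \<notin> (F::'b::order_bot set)"
  using filter_UNIV[of "(\<le>)" F bot] by auto

locale bset =
  fixes p :: "'x \<Rightarrow> 'b::{distrib_lattice,order_bot}" and r :: "'x \<Rightarrow> 'b \<Rightarrow> 'x"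
  assumes bs: "boolean_set p r"
begin

abbreviation lx where "lx \<equiv> pre_le p r"

lemma bsp: "gen_boolean_algebra TYPE('b)" "presheaf p r" "global_support p"
   "\<And>x y. compatible p r x y \<Longrightarrow> \<exists>j. is_join_of lx x y j"
   "\<And>x. p x = bot \<Longrightarrow> is_least lx x"
  using bs unfolding boolean_set_def by simp_all

lemma gba: "\<And>a b :: 'b. a \<le> b \<Longrightarrow> \<exists>c. inf a c = bot \<and> sup a c = b"
  using bsp(1) unfolding gen_boolean_algebra_def by simp
lemma P1: "f \<le> p x \<Longrightarrow> p (r x f) = f"
  using bsp(2) unfolding presheaf_def by simp
lemma P2[simp]: "r x (p x) = x"
  using bsp(2) unfolding presheaf_def by simp
lemma P3: "g \<le> f \<Longrightarrow> f \<le> p x \<Longrightarrow> r (r x f) g = r x g"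
  using bsp(2) unfolding presheaf_def by simp
lemma gs: "\<exists>x. p x = e"
  using bsp(3) unfolding global_support_def by simp
lemma joins: "compatible p r x y \<Longrightarrow> \<exists>j. is_join_of lx x y j"
  by (rule bsp(4))
lemma botleast: "p x = bot \<Longrightarrow> lx x y"
  using bsp(5) unfolding is_least_def by simp

lemma lx_refl: "lx x x" by (simp add: pre_le_def)
lemma lx_p: "lx x y \<Longrightarrow> p x \<le> p y" by (simp add: pre_le_def)
lemma lx_r: "lx x y \<Longrightarrow> x = r y (p x)" by (simp add: pre_le_def)
lemma lx_trans: "lx x y \<Longrightarrow> lx y z \<Longrightarrow> lx x z"
proof -
  assume a: "lx x y" "lx y z"
  then have 1: "p x \<le> p y" "x = r y (p x)" "p y \<le> p z" "y = r z (p y)"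
    by (auto simp: pre_le_def)
  have "x = r (r z (p y)) (p x)" using 1 by simp
  also have "\<dots> = r z (p x)" using P3[of "p x" "p y" z] 1 by simp
  finally show ?thesis using 1 by (simp add: pre_le_def)
qed
lemma lx_antisym: "lx x y \<Longrightarrow> lx y x \<Longrightarrow> x = y"
proof -
  assume a: "lx x y" "lx y x"
  then have "p x = p y" "x = r y (p x)" by (auto simp: pre_le_def)
  then show ?thesis by simp
qed
lemma lx_restr: "f \<le> p x \<Longrightarrow> lx (r x f) x"
  unfolding pre_le_def by (simp add: P1)
lemma lx_restr_mono: "f \<le> g \<Longrightarrow> g \<le> p x \<Longrightarrow> lx (r x f) (r x g)"
  unfolding pre_le_def by (simp add: P1 P3 order_trans)

lemma least_p: "(\<forall>y. lx z y) \<Longrightarrow> p z = bot"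
proof -
  assume "\<forall>y. lx z y"
  then have "p z \<le> p (r z bot)" using lx_p by blast
  then show ?thesis by (simp add: P1 bot_unique)
qed

lemma extend:
  assumes "p a \<le> b"
  shows "\<exists>j. lx a j \<and> p j = b"
proof -
  obtain c where c: "inf (p a) c = bot" "sup (p a) c = b" using gba[OF assms] by blast
  obtain y where y: "p y = c" using gs by blast
  define z where "z = r a bot"
  have pz: "p z = bot" unfolding z_def by (simp add: P1)
  have "is_meet_of lx a y z"
    unfolding is_meet_of_def
  proof (intro conjI allI impI)
    show "lx z a" "lx z y" using botleast[OF pz] by auto
    fix w assume "lx w a \<and> lx w y"
    then have "p w \<le> inf (p a) (p y)" using lx_p by auto
    then have "p w = bot" using c y by (simp add: bot_unique)
    then show "lx w z" using botleast by blast
  qed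
  then have "compatible p r a y" unfolding compatible_def using pz c y by auto
  then obtain j where j: "is_join_of lx a y j" using joins by blast
  then have aj: "lx a j" and yj: "lx y j" and jmin: "\<And>w. lx a w \<Longrightarrow> lx y w \<Longrightarrow> lx j w"
    unfolding is_join_of_def by auto
  have "p a \<le> p j" "p y \<le> p j" using aj yj lx_p by auto
  then have bj: "b \<le> p j" using c y by (metis le_sup_iff)
  define j' where "j' = r j b"
  have pj': "p j' = b" unfolding j'_def using bj by (simp add: P1)
  have "lx a j'"
    unfolding pre_le_def j'_def using assms bj P3[of "p a" b j] lx_r[OF aj] by (simp add: P1)
  moreover have "lx y j'"
  proof -
    have cb: "c \<le> b" using c(2) by auto
    show ?thesis
      unfolding pre_le_def j'_def using c y bj cb P3[of "p y" b j] lx_r[OF yj] by (simp add: P1)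
  qed
  ultimately have "lx j j'" using jmin by blast
  then have "p j \<le> b" using lx_p pj' by fastforce
  with bj have "p j = b" by simp
  with aj show ?thesis by blast
qed


definition H where "H x F = {y. \<exists>f\<in>F. f \<le> p x \<and> lx (r x f) y}"

lemma pimg_filter: assumes G: "is_filter lx G" shows "is_filter (\<le>) (p ` G)"
  unfolding is_filter_def
proof (intro conjI ballI allI impI)
  show "p ` G \<noteq> {}" using G unfolding is_filter_def by simp
next
  fix a b assume "a \<in> p ` G" "b \<in> p ` G"
  then obtain x y where "x \<in> G" "y \<in> G" "a = p x" "b = p y" by blast
  then obtain c where "c \<in> G" "lx c x" "lx c y" using filter_dir[of lx G x y] G by blast
  then show "\<exists>c\<in>p ` G. c \<le> a \<and> c \<le> b" using lx_p \<open>a = p x\<close> \<open>b = p y\<close> by blast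
next
  fix a b assume "a \<in> p ` G" "a \<le> b"
  then obtain x where x: "x \<in> G" "a = p x" by blast
  then obtain j where "lx x j" "p j = b" using extend \<open>a \<le> b\<close> by blast
  then have "j \<in> G" using filter_up[of lx G x j] G x by blast
  then show "b \<in> p ` G" using \<open>p j = b\<close> by blast
qed

lemma pimg_proper: assumes G: "is_filter lx G" "G \<noteq> UNIV" shows "bot \<notin> p ` G"
proof
  assume "bot \<in> p ` G"
  then obtain x where "x \<in> G" "p x = bot" by force
  then have "G = UNIV" using filter_UNIV[of lx G x] G botleast by blast
  with G show False by simp
qed

lemma H_x: "p x \<in> F \<Longrightarrow> x \<in> H x F"
  unfolding H_def using lx_refl by force

lemma H_filter: assumes F: "is_filter (\<le>) F" "p x \<in> F" shows "is_filter lx (H x F)"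
  unfolding is_filter_def
proof (intro conjI ballI allI impI)
  show "H x F \<noteq> {}" using H_x F by blast
next
  fix a b assume "a \<in> H x F" "b \<in> H x F"
  then obtain f1 f2 where f: "f1 \<in> F" "f1 \<le> p x" "lx (r x f1) a" "f2 \<in> F" "f2 \<le> p x" "lx (r x f2) b"
    unfolding H_def by blast
  define f where "f = inf f1 f2"
  have fF: "f \<in> F" unfolding f_def using bfilter_inf F f by blast
  have fx: "f \<le> p x" unfolding f_def using f by (simp add: le_infI1)
  have "r x f \<in> H x F" unfolding H_def using fF fx lx_refl by blast
  moreover have "lx (r x f) a" using lx_restr_mono[of f f1 x] f lx_trans unfolding f_def by (meson inf_le1)
  moreover have "lx (r x f) b" using lx_restr_mono[of f f2 x] f lx_trans unfolding f_def by (meson inf_le2)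
  ultimately show "\<exists>c\<in>H x F. lx c a \<and> lx c b" by blast
next
  fix a b assume "a \<in> H x F" "lx a b"
  then show "b \<in> H x F" unfolding H_def using lx_trans by blast
qed

lemma H_proper: assumes "bot \<notin> F" shows "H x F \<noteq> UNIV"
proof
  assume "H x F = UNIV"
  then have "r x bot \<in> H x F" by simp
  then obtain f where f: "f \<in> F" "f \<le> p x" "lx (r x f) (r x bot)" unfolding H_def by blast
  then have "f \<le> bot" using lx_p[OF f(3)] by (simp add: P1)
  then show False using f assms by (simp add: bot_unique)
qed

lemma H_img: assumes F: "is_filter (\<le>) F" "p x \<in> F" shows "p ` H x F = F"
proof
  show "p ` H x F \<subseteq> F"
  proof
    fix b assume "b \<in> p ` H x F"
    then obtain y f where "b = p y" "f \<in> F" "f \<le> p x" "lx (r x f) y" unfolding H_def by blast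
    then have "f \<le> b" using lx_p P1 by fastforce
    then show "b \<in> F" using filter_up[of "(\<le>)" F f b] F \<open>f \<in> F\<close> by blast
  qed
next
  show "F \<subseteq> p ` H x F"
  proof
    fix b assume b: "b \<in> F"
    define g where "g = inf b (p x)"
    have g: "g \<in> F" "g \<le> p x" unfolding g_def using bfilter_inf F b by auto
    have "r x g \<in> H x F" unfolding H_def using g lx_refl by blast
    moreover have "p (r x g) \<le> b" using g P1 unfolding g_def by simp
    ultimately obtain j where "lx (r x g) j" "p j = b" using extend by blast
    then have "j \<in> H x F" using filter_up[of lx "H x F" "r x g" j] H_filter[OF F] \<open>r x g \<in> H x F\<close> by blast
    then show "b \<in> p ` H x F" using \<open>p j = b\<close> by blast
  qed
qed

lemma H_eq: assumes G: "is_filter lx G" "x \<in> G" shows "G = H x (p ` G)"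
proof
  show "G \<subseteq> H x (p ` G)"
  proof
    fix y assume "y \<in> G"
    then obtain c where c: "c \<in> G" "lx c x" "lx c y" using filter_dir[of lx G x y] G by blast
    then have "c = r x (p c)" "p c \<le> p x" using lx_r lx_p by auto
    then show "y \<in> H x (p ` G)" unfolding H_def using c by force
  qed
next
  show "H x (p ` G) \<subseteq> G"
  proof
    fix y assume "y \<in> H x (p ` G)"
    then obtain g where g: "g \<in> G" "p g \<le> p x" "lx (r x (p g)) y" unfolding H_def by blast
    obtain c where c: "c \<in> G" "lx c x" "lx c g" using filter_dir[of lx G x g] G g by blast
    then have cc: "c = r x (p c)" "p c \<le> p g" using lx_r lx_p by auto
    have "lx (r x (p c)) (r x (p g))" using lx_restr_mono cc g by blast
    then have "lx c y" using cc g lx_trans by metis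
    then show "y \<in> G" using filter_up[of lx G c y] G c by blast
  qed
qed

lemma H_mono: "F \<subseteq> F' \<Longrightarrow> H x F \<subseteq> H x F'"
  unfolding H_def by blast


lemma T1: assumes G: "is_ultrafilter lx G" shows "is_ultrafilter (\<le>) (p ` G)"
proof -
  have Gf: "is_filter lx G" "G \<noteq> UNIV" using G unfolding is_ultrafilter_def by auto
  have Gmax: "\<And>G'. is_filter lx G' \<Longrightarrow> G' \<noteq> UNIV \<Longrightarrow> G \<subseteq> G' \<Longrightarrow> G' = G"
    using G unfolding is_ultrafilter_def by blast
  have pf: "is_filter (\<le>) (p ` G)" using pimg_filter Gf by blast
  have pp: "p ` G \<noteq> UNIV" using pimg_proper Gf by blast
  obtain x where x: "x \<in> G" using filter_ne[of lx G] Gf by blast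
  have "F' = p ` G" if F': "is_filter (\<le>) F'" "F' \<noteq> UNIV" "p ` G \<subseteq> F'" for F'
  proof -
    have px: "p x \<in> F'" using x F' by blast
    have bF: "bot \<notin> F'" using bfilter_proper F' by blast
    have "G \<subseteq> H x F'" using H_eq[OF Gf(1) x] H_mono[OF F'(3), of x] by simp
    then have "H x F' = G" using Gmax H_filter[OF F'(1) px] H_proper[OF bF] by blast
    then show ?thesis using H_img[OF F'(1) px] by simp
  qed
  then show ?thesis unfolding is_ultrafilter_def using pf pp by blast
qed

lemma T2: assumes F: "is_ultrafilter (\<le>) F" "p x \<in> F"
  shows "is_ultrafilter lx (H x F)" "x \<in> H x F" "p ` H x F = F"
proof -
  have Ff: "is_filter (\<le>) F" "F \<noteq> UNIV" using F unfolding is_ultrafilter_def by auto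
  have Fmax: "\<And>F'. is_filter (\<le>) F' \<Longrightarrow> F' \<noteq> UNIV \<Longrightarrow> F \<subseteq> F' \<Longrightarrow> F' = F"
    using F unfolding is_ultrafilter_def by blast
  show hx: "x \<in> H x F" using H_x F by blast
  show hi: "p ` H x F = F" using H_img Ff F by blast
  have hf: "is_filter lx (H x F)" using H_filter Ff F by blast
  have hp: "H x F \<noteq> UNIV" using H_proper bfilter_proper Ff by blast
  have "H' = H x F" if H': "is_filter lx H'" "H' \<noteq> UNIV" "H x F \<subseteq> H'" for H'
  proof -
    have "x \<in> H'" using hx H' by blast
    then have e: "H' = H x (p ` H')" using H_eq H' by blast
    have "p ` H' = F" using Fmax pimg_filter[OF H'(1)] pimg_proper[OF H'(1,2)] bfilter_proper
        hi H'(3) by (metis image_mono)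
    then show ?thesis using e by simp
  qed
  then show "is_ultrafilter lx (H x F)" unfolding is_ultrafilter_def using hf hp by blast
qed

lemma T3: assumes "is_ultrafilter lx G1" "is_ultrafilter lx G2" "x \<in> G1" "x \<in> G2" "p ` G1 = p ` G2"
  shows "G1 = G2"
  using H_eq[of G1 x] H_eq[of G2 x] assms uf_filter[of lx] by metis


definition Kf :: "'b \<Rightarrow> 'b set \<Rightarrow> 'b set" where "Kf a F = {y. \<exists>f\<in>F. inf a f \<le> y}"

lemma Kf: assumes F: "is_filter (\<le>) (F::'b set)"
  shows "is_filter (\<le>) (Kf a F)" "F \<subseteq> Kf a F" "a \<in> Kf a F"
proof -
  obtain f0 where f0: "f0 \<in> F" using filter_ne[of "(\<le>)" F] F by blast
  show "a \<in> Kf a F" unfolding Kf_def using f0 by auto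
  show "F \<subseteq> Kf a F" unfolding Kf_def by (auto intro: le_infI2)
  show "is_filter (\<le>) (Kf a F)"
    unfolding is_filter_def
  proof (intro conjI ballI allI impI)
    show "Kf a F \<noteq> {}" unfolding Kf_def using f0 by auto
  next
    fix x y assume "x \<in> Kf a F" "y \<in> Kf a F"
    then obtain f1 f2 where f: "f1 \<in> F" "inf a f1 \<le> x" "f2 \<in> F" "inf a f2 \<le> y" unfolding Kf_def by blast
    have "inf f1 f2 \<in> F" using bfilter_inf F f by blast
    then have "inf a (inf f1 f2) \<in> Kf a F" unfolding Kf_def by blast
    moreover have "inf a (inf f1 f2) \<le> x" "inf a (inf f1 f2) \<le> y" using f
      by (meson inf_le1 inf_le2 inf_mono order_refl order_trans)+
    ultimately show "\<exists>c\<in>Kf a F. c \<le> x \<and> c \<le> y" by blast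
  next
    fix x y assume "x \<in> Kf a F" "x \<le> y"
    then show "y \<in> Kf a F" unfolding Kf_def using order_trans by blast
  qed
qed

lemma uf_parts: assumes u: "is_ultrafilter (\<le>) (F::'b set)"
  shows "is_filter (\<le>) F" "bot \<notin> F"
    "\<And>F'. is_filter (\<le>) F' \<Longrightarrow> bot \<notin> F' \<Longrightarrow> F \<subseteq> F' \<Longrightarrow> F' = F"
proof -
  show f: "is_filter (\<le>) F" using u unfolding is_ultrafilter_def by simp
  have "F \<noteq> UNIV" using u unfolding is_ultrafilter_def by simp
  then show "bot \<notin> F" using bfilter_proper[OF f] by simp
  fix F' :: "'b set" assume F': "is_filter (\<le>) F'" "bot \<notin> F'" "F \<subseteq> F'"
  have "F' \<noteq> UNIV" using F' by auto
  then show "F' = F" using u F' unfolding is_ultrafilter_def by simp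
qed

lemma sep: assumes F: "is_ultrafilter (\<le>) (F::'b set)" and b: "b \<notin> F" shows "\<exists>f\<in>F. inf b f = bot"
proof -
  note u = uf_parts[OF F]
  have "bot \<in> Kf b F"
  proof (rule ccontr)
    assume "bot \<notin> Kf b F"
    then have "Kf b F = F" by (rule u(3)[OF Kf(1)[OF u(1)] _ Kf(2)[OF u(1)]])
    then show False using Kf(3)[OF u(1), of b] b by simp
  qed
  then show ?thesis unfolding Kf_def by (auto simp: bot_unique)
qed

lemma prime: assumes F: "is_ultrafilter (\<le>) (F::'b set)" and s: "sup a c \<in> F" shows "a \<in> F \<or> c \<in> F"
proof (rule ccontr)
  assume "\<not> (a \<in> F \<or> c \<in> F)"
  then have n: "a \<notin> F" "c \<notin> F" by auto
  obtain f1 where f1: "f1 \<in> F" "inf a f1 = bot" using sep[OF F n(1)] by blast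
  obtain f2 where f2: "f2 \<in> F" "inf c f2 = bot" using sep[OF F n(2)] by blast
  note f = f1 f2
  note u = uf_parts[OF F]
  have "inf (sup a c) (inf f1 f2) \<in> F" by (rule bfilter_inf[OF u(1) s bfilter_inf[OF u(1) f1(1) f2(1)]])
  moreover have "inf (sup a c) (inf f1 f2) = sup (inf a (inf f1 f2)) (inf c (inf f1 f2))"
    by (simp add: inf_sup_distrib2)
  moreover have "inf a (inf f1 f2) = bot" by (simp add: inf_assoc[symmetric] f1(2) inf_absorb1)
  moreover have "inf c (inf f1 f2) = bot" by (simp add: inf_left_commute[of c f1] f2(2) inf_absorb2)
  ultimately show False using u(2) by simp
qed

lemma uf_ne: assumes "is_ultrafilter (\<le>) (F1::'b set)" "is_ultrafilter (\<le>) F2" "F1 \<noteq> F2"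
  shows "\<exists>b\<in>F1. b \<notin> F2"
proof (rule ccontr)
  assume "\<not> (\<exists>b\<in>F1. b \<notin> F2)"
  then have "F1 \<subseteq> F2" by blast
  then have "F2 = F1" using uf_parts(3)[OF assms(1)] uf_parts(1,2)[OF assms(2)] by simp
  with assms(3) show False by simp
qed

lemma hausdorff: "Hausdorff_space (ultrafilter_space ((\<le>) :: 'b \<Rightarrow> 'b \<Rightarrow> bool))"
  unfolding Hausdorff_space_def topspace_ufs
proof (intro allI impI)
  fix F1 F2 :: "'b set"
  assume a: "F1 \<in> {G. is_ultrafilter (\<le>) G} \<and> F2 \<in> {G. is_ultrafilter (\<le>) G} \<and> F1 \<noteq> F2"
  then obtain b where b: "b \<in> F1" "b \<notin> F2" using uf_ne by auto
  then obtain f where f: "f \<in> F2" "inf b f = bot" using sep a by auto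
  have "disjnt (LL (\<le>) b) (LL (\<le>) f)"
  proof -
    have "False" if "G \<in> LL (\<le>) b" "G \<in> LL (\<le>) f" for G
    proof -
      have u: "is_ultrafilter (\<le>) G" "b \<in> G" "f \<in> G" using that by (auto simp: LL_def)
      then have "inf b f \<in> G" using bfilter_inf uf_parts(1) by blast
      then show False using f uf_parts(2)[OF u(1)] by simp
    qed
    then show ?thesis unfolding disjnt_def by blast
  qed
  then show "\<exists>U V. openin (ultrafilter_space (\<le>)) U \<and> openin (ultrafilter_space (\<le>)) V \<and> F1 \<in> U \<and> F2 \<in> V \<and> disjnt U V"
  proof (intro exI conjI)
    show "openin (ultrafilter_space (\<le>)) (LL (\<le>) b)" "openin (ultrafilter_space (\<le>)) (LL (\<le>) f)"
      by (rule openin_LL)+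
    show "F1 \<in> LL (\<le>) b" "F2 \<in> LL (\<le>) f" using a b f by (auto simp: LL_def)
  qed simp
qed


lemma chain_filter:
  assumes ne: "\<C> \<noteq> {}" and ch: "\<And>X Y. X \<in> \<C> \<Longrightarrow> Y \<in> \<C> \<Longrightarrow> X \<subseteq> Y \<or> Y \<subseteq> X"
    and f: "\<And>X. X \<in> \<C> \<Longrightarrow> is_filter (\<le>) (X::'b set)"
  shows "is_filter (\<le>) (\<Union>\<C>)"
  unfolding is_filter_def
proof (intro conjI ballI allI impI)
  obtain C where C: "C \<in> \<C>" using ne by blast
  then obtain a where "a \<in> C" using filter_ne[of "(\<le>)" C] f by blast
  then show "\<Union>\<C> \<noteq> {}" using C by blast
next
  fix x y assume "x \<in> \<Union>\<C>" "y \<in> \<Union>\<C>"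
  then obtain C1 C2 where c: "C1 \<in> \<C>" "x \<in> C1" "C2 \<in> \<C>" "y \<in> C2" by blast
  show "\<exists>c\<in>\<Union>\<C>. c \<le> x \<and> c \<le> y"
  proof (cases "C1 \<subseteq> C2")
    case True
    then obtain c where "c \<in> C2" "c \<le> x" "c \<le> y" using filter_dir[of "(\<le>)" C2 x y] f c by blast
    then show ?thesis using c by blast
  next
    case False
    then have "C2 \<subseteq> C1" using ch c by blast
    then obtain c where "c \<in> C1" "c \<le> x" "c \<le> y" using filter_dir[of "(\<le>)" C1 x y] f c by blast
    then show ?thesis using c by blast
  qed
next
  fix x y assume "x \<in> \<Union>\<C>" "x \<le> y"
  then obtain C where "C \<in> \<C>" "x \<in> C" by blast
  then show "y \<in> \<Union>\<C>" using filter_up[of "(\<le>)" C x y] f \<open>x \<le> y\<close> by blast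
qed

lemma compact_LL: "compactin (ultrafilter_space (\<le>)) (LL (\<le>) (b::'b))"
  unfolding compactin_def
proof (intro conjI allI impI)
  show "LL (\<le>) b \<subseteq> topspace (ultrafilter_space (\<le>))" by (auto simp: topspace_ufs LL_def)
  fix \<U> assume A: "(\<forall>U\<in>\<U>. openin (ultrafilter_space (\<le>)) U) \<and> LL (\<le>) b \<subseteq> \<Union>\<U>"
  define D where "D = {d::'b. \<exists>\<V>. finite \<V> \<and> \<V> \<subseteq> \<U> \<and> LL (\<le>) d \<subseteq> \<Union>\<V>}"
  have Dbot: "bot \<in> D"
  proof -
    have "G \<notin> LL (\<le>) (bot::'b)" for G
    proof
      assume "G \<in> LL (\<le>) (bot::'b)"
      then have "is_ultrafilter (\<le>) G" "bot \<in> G" by (auto simp: LL_def)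
      then show False using uf_parts(2) by blast
    qed
    then have "LL (\<le>) (bot::'b) = {}" by blast
    then show ?thesis unfolding D_def by (intro CollectI exI[of _ "{}"]) auto
  qed
  have Ddown: "d' \<in> D" if "d \<in> D" "d' \<le> d" for d d'
  proof -
    have "\<exists>V. finite V \<and> V \<subseteq> \<U> \<and> LL (\<le>) d \<subseteq> \<Union>V" using that(1) unfolding D_def by simp
    then obtain V where V: "finite V" "V \<subseteq> \<U>" "LL (\<le>) d \<subseteq> \<Union>V" by (elim exE conjE)
    have "LL (\<le>) d' \<subseteq> LL (\<le>) d" by (rule LL_mono[of "(\<le>)" d' d, OF that(2)])
    then have "LL (\<le>) d' \<subseteq> \<Union>V" using V(3) by (rule subset_trans)
    then show ?thesis unfolding D_def mem_Collect_eq using V(1,2) by blast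
  qed
  have Dsup: "sup d1 d2 \<in> D" if "d1 \<in> D" "d2 \<in> D" for d1 d2
  proof -
    have "\<exists>V. finite V \<and> V \<subseteq> \<U> \<and> LL (\<le>) d1 \<subseteq> \<Union>V" using that(1) unfolding D_def by simp
    then obtain V1 where V1: "finite V1" "V1 \<subseteq> \<U>" "LL (\<le>) d1 \<subseteq> \<Union>V1" by (elim exE conjE)
    have "\<exists>V. finite V \<and> V \<subseteq> \<U> \<and> LL (\<le>) d2 \<subseteq> \<Union>V" using that(2) unfolding D_def by simp
    then obtain V2 where V2: "finite V2" "V2 \<subseteq> \<U>" "LL (\<le>) d2 \<subseteq> \<Union>V2" by (elim exE conjE)
    have "LL (\<le>) (sup d1 d2) \<subseteq> LL (\<le>) d1 \<union> LL (\<le>) d2"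
    proof
      fix G assume "G \<in> LL (\<le>) (sup d1 d2)"
      then have "is_ultrafilter (\<le>) G" "sup d1 d2 \<in> G" by (auto simp: LL_def)
      then have "d1 \<in> G \<or> d2 \<in> G" by (rule prime)
      then show "G \<in> LL (\<le>) d1 \<union> LL (\<le>) d2" using \<open>is_ultrafilter (\<le>) G\<close> by (auto simp: LL_def)
    qed
    also have "\<dots> \<subseteq> \<Union>(V1 \<union> V2)" using V1(3) V2(3) by auto
    finally have "LL (\<le>) (sup d1 d2) \<subseteq> \<Union>(V1 \<union> V2)" .
    moreover have "finite (V1 \<union> V2)" "V1 \<union> V2 \<subseteq> \<U>" using V1 V2 by auto
    ultimately show ?thesis unfolding D_def mem_Collect_eq by blast
  qed
  have "b \<in> D"
  proof (rule ccontr)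
    assume nb: "b \<notin> D"
    define \<A> where "\<A> = {F. is_filter (\<le>) F \<and> b \<in> F \<and> F \<inter> D = {}}"
    have up: "{y. b \<le> y} \<in> \<A>"
    proof -
      have "is_filter (\<le>) {y. b \<le> y}" unfolding is_filter_def by (auto intro: order_trans)
      moreover have "{y. b \<le> y} \<inter> D = {}" using Ddown nb by blast
      ultimately show ?thesis unfolding \<A>_def by simp
    qed
    have "\<exists>M\<in>\<A>. \<forall>X\<in>\<A>. M \<subseteq> X \<longrightarrow> X = M"
    proof (rule subset_Zorn_nonempty)
      show "\<A> \<noteq> {}" using up by blast
      fix \<C> assume C: "\<C> \<noteq> {}" "subset.chain \<A> \<C>"
      then have C': "\<C> \<subseteq> \<A>" "\<And>X Y. X \<in> \<C> \<Longrightarrow> Y \<in> \<C> \<Longrightarrow> X \<subseteq> Y \<or> Y \<subseteq> X"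
        unfolding subset_chain_def by auto
      have "is_filter (\<le>) (\<Union>\<C>)"
        by (rule chain_filter[OF C(1) C'(2)]) (use C'(1) in \<open>auto simp: \<A>_def\<close>)
      moreover have "b \<in> \<Union>\<C>" using C C'(1) unfolding \<A>_def by blast
      moreover have "\<Union>\<C> \<inter> D = {}" using C'(1) unfolding \<A>_def by blast
      ultimately show "\<Union>\<C> \<in> \<A>" unfolding \<A>_def by simp
    qed
    then obtain F where FA: "F \<in> \<A>" and Fmax: "\<And>X. X \<in> \<A> \<Longrightarrow> F \<subseteq> X \<Longrightarrow> X = F" by blast
    have Ff: "is_filter (\<le>) F" "b \<in> F" "F \<inter> D = {}" using FA unfolding \<A>_def by auto
    have claim: "\<exists>f\<in>F. inf a f \<in> D" if "a \<notin> F" for a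
    proof (rule ccontr)
      assume "\<not> (\<exists>f\<in>F. inf a f \<in> D)"
      then have "Kf a F \<inter> D = {}" unfolding Kf_def using Ddown by blast
      moreover have "b \<in> Kf a F" using Kf(2)[OF Ff(1)] Ff(2) by blast
      ultimately have "Kf a F \<in> \<A>" using Kf(1)[OF Ff(1)] unfolding \<A>_def by simp
      then have "Kf a F = F" using Fmax Kf(2)[OF Ff(1)] by blast
      then show False using Kf(3)[OF Ff(1), of a] that by simp
    qed
    have Fbot: "bot \<notin> F" using Dbot Ff(3) by blast
    have Fu: "is_ultrafilter (\<le>) F"
      unfolding is_ultrafilter_def
    proof (intro conjI allI impI)
      show "is_filter (\<le>) F" by (rule Ff(1))
      show "F \<noteq> UNIV" using Fbot by blast
      fix G assume G: "is_filter (\<le>) G \<and> G \<noteq> UNIV \<and> F \<subseteq> G"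
      have Gbot: "bot \<notin> G" using G bfilter_proper by blast
      have "G \<subseteq> F"
      proof
        fix a assume aG: "a \<in> G"
        show "a \<in> F"
        proof (rule ccontr)
          assume "a \<notin> F"
          then obtain f where f: "f \<in> F" "inf a f \<in> D" using claim by blast
          obtain e where e: "inf (inf a f) e = bot" "sup (inf a f) e = f" using gba[of "inf a f" f] by auto
          have "e \<in> F"
          proof (rule ccontr)
            assume "e \<notin> F"
            then obtain f' where f': "f' \<in> F" "inf e f' \<in> D" using claim by blast
            have "inf f f' = sup (inf (inf a f) f') (inf e f')"
              using e(2) by (metis inf_sup_distrib2)
            also have "\<dots> \<le> sup (inf a f) (inf e f')" by (rule sup_mono) (rule inf_le1, rule order_refl)
            finally have "inf f f' \<in> D" using Ddown Dsup f f' by blast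
            moreover have "inf f f' \<in> F" using bfilter_inf Ff(1) f f' by blast
            ultimately show False using Ff(3) by blast
          qed
          then have "e \<in> G" "f \<in> G" using G f by auto
          then have "inf (inf a f) e \<in> G" using bfilter_inf[of G] G aG by blast
          then show False using e Gbot by simp
        qed
      qed
      then show "G = F" using G by blast
    qed
    have "F \<in> LL (\<le>) b" using Fu Ff by (simp add: LL_def)
    then obtain U where U: "U \<in> \<U>" "F \<in> U" using A by blast
    then obtain c where c: "c \<in> F" "LL (\<le>) c \<subseteq> U" using A openin_ufs[of "(\<le>)" U] by blast
    have "c \<in> D" unfolding D_def using U c by (intro CollectI exI[of _ "{U}"]) auto
    then show False using c Ff(3) by blast
  qed
  then show "\<exists>\<F>. finite \<F> \<and> \<F> \<subseteq> \<U> \<and> LL (\<le>) b \<subseteq> \<Union>\<F>" unfolding D_def by blast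
qed


abbreviation pim where "pim \<equiv> (\<lambda>G. p ` G)"

lemma img_LL: "pim ` LL lx x = LL (\<le>) (p x)"
proof
  show "pim ` LL lx x \<subseteq> LL (\<le>) (p x)"
  proof
    fix F assume "F \<in> pim ` LL lx x"
    then obtain G where G0: "G \<in> LL lx x" "F = p ` G" by (rule imageE)
    then have G: "is_ultrafilter lx G" "x \<in> G" "F = p ` G" by (simp_all add: LL_def)
    then show "F \<in> LL (\<le>) (p x)" using T1[OF G(1)] by (auto simp: LL_def)
  qed
  show "LL (\<le>) (p x) \<subseteq> pim ` LL lx x"
  proof
    fix F assume "F \<in> LL (\<le>) (p x)"
    then have F: "is_ultrafilter (\<le>) F" "p x \<in> F" by (auto simp: LL_def)
    have "H x F \<in> LL lx x" using T2[OF F] by (simp add: LL_def)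
    moreover have "F = pim (H x F)" using T2(3)[OF F] by simp
    ultimately show "F \<in> pim ` LL lx x" by (rule rev_image_eqI)
  qed
qed

lemma surjp: "pim ` topspace (ultrafilter_space lx) = topspace (ultrafilter_space (\<le>))"
  unfolding topspace_ufs
proof
  show "pim ` {G. is_ultrafilter lx G} \<subseteq> {G. is_ultrafilter (\<le>) G}" using T1 by auto
  show "{G. is_ultrafilter (\<le>) G} \<subseteq> pim ` {G. is_ultrafilter lx G}"
  proof
    fix F :: "'b set" assume "F \<in> {G. is_ultrafilter (\<le>) G}"
    then have F: "is_ultrafilter (\<le>) F" by simp
    obtain b where b: "b \<in> F" using filter_ne[of "(\<le>)" F] uf_parts(1)[OF F] by blast
    obtain x where x: "p x = b" using gs by blast
    have "F \<in> pim ` LL lx x" using img_LL F b x by (simp add: LL_def)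
    then show "F \<in> pim ` {G. is_ultrafilter lx G}" by (auto simp: LL_def)
  qed
qed

lemma open_img: assumes V: "openin (ultrafilter_space lx) V"
  shows "openin (ultrafilter_space (\<le>)) (pim ` V)"
  unfolding openin_ufs
proof
  fix F assume "F \<in> pim ` V"
  then obtain G where G: "G \<in> V" "F = p ` G" by blast
  then obtain a where a: "a \<in> G" "G \<in> LL lx a" "LL lx a \<subseteq> V" using V openin_ufs[of lx V] by blast
  have Gu: "is_ultrafilter lx G" using a by (simp add: LL_def)
  have "p a \<in> F" using G a by blast
  moreover have "F \<in> LL (\<le>) (p a)" using T1[OF Gu] G \<open>p a \<in> F\<close> by (simp add: LL_def)
  moreover have "LL (\<le>) (p a) \<subseteq> pim ` V" using img_LL[of a] a(3) by blast
  ultimately show "\<exists>b\<in>F. F \<in> LL (\<le>) b \<and> LL (\<le>) b \<subseteq> pim ` V" by blast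
qed

lemma cont: "continuous_map (ultrafilter_space lx) (ultrafilter_space (\<le>)) pim"
  unfolding continuous_map_def
proof (intro conjI allI impI)
  show "pim \<in> topspace (ultrafilter_space lx) \<rightarrow> topspace (ultrafilter_space (\<le>))"
    using surjp by blast
  fix U :: "'b set set" assume U: "openin (ultrafilter_space (\<le>)) U"
  show "openin (ultrafilter_space lx) {G \<in> topspace (ultrafilter_space lx). pim G \<in> U}"
    unfolding openin_ufs
  proof
    fix G assume "G \<in> {G \<in> topspace (ultrafilter_space lx). pim G \<in> U}"
    then have G: "is_ultrafilter lx G" "p ` G \<in> U" by (auto simp: topspace_ufs)
    then obtain b where b: "b \<in> p ` G" "LL (\<le>) b \<subseteq> U" using U openin_ufs[of "(\<le>)" U] by blast
    then obtain x where x: "x \<in> G" "p x = b" by blast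
    have "LL lx x \<subseteq> {G \<in> topspace (ultrafilter_space lx). pim G \<in> U}"
    proof
      fix G' assume "G' \<in> LL lx x"
      then have "pim G' \<in> LL (\<le>) (p x)" using img_LL by blast
      then show "G' \<in> {G \<in> topspace (ultrafilter_space lx). pim G \<in> U}"
        using \<open>G' \<in> LL lx x\<close> b x by (auto simp: topspace_ufs LL_def)
    qed
    moreover have "G \<in> LL lx x" using G x by (simp add: LL_def)
    ultimately show "\<exists>a\<in>G. G \<in> LL lx a \<and> LL lx a \<subseteq> {G \<in> topspace (ultrafilter_space lx). pim G \<in> U}"
      using x by blast
  qed
qed

lemma etale: "etale_space (ultrafilter_space lx) pim (ultrafilter_space (\<le>))"
  unfolding etale_space_def local_homeomorphism_def
proof (intro conjI ballI)
  show "pim ` topspace (ultrafilter_space lx) = topspace (ultrafilter_space (\<le>))" by (rule surjp)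
  show "continuous_map (ultrafilter_space lx) (ultrafilter_space (\<le>)) pim" by (rule cont)
  fix G assume "G \<in> topspace (ultrafilter_space lx)"
  then have Gu: "is_ultrafilter lx G" by (simp add: topspace_ufs)
  obtain x where x: "x \<in> G" using filter_ne[of lx G] uf_filter[OF Gu] by blast
  define U where "U = LL lx x"
  have Uo: "openin (ultrafilter_space lx) U" unfolding U_def by (rule openin_LL)
  have GU: "G \<in> U" unfolding U_def using Gu x by (simp add: LL_def)
  have iU: "pim ` U = LL (\<le>) (p x)" unfolding U_def by (rule img_LL)
  have iUo: "openin (ultrafilter_space (\<le>)) (pim ` U)" unfolding iU by (rule openin_LL)
  have tsU: "topspace (subtopology (ultrafilter_space lx) U) = U"
    using openin_subset[OF Uo] by auto
  have tsiU: "topspace (subtopology (ultrafilter_space (\<le>)) (pim ` U)) = pim ` U"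
    using openin_subset[OF iUo] by auto
  have "homeomorphic_map (subtopology (ultrafilter_space lx) U) (subtopology (ultrafilter_space (\<le>)) (pim ` U)) pim"
  proof (rule bijective_open_imp_homeomorphic_map)
    show "continuous_map (subtopology (ultrafilter_space lx) U) (subtopology (ultrafilter_space (\<le>)) (pim ` U)) pim"
      unfolding continuous_map_in_subtopology using continuous_map_from_subtopology[OF cont] tsU by auto
    show "open_map (subtopology (ultrafilter_space lx) U) (subtopology (ultrafilter_space (\<le>)) (pim ` U)) pim"
      unfolding open_map_def
    proof (intro allI impI)
      fix V assume "openin (subtopology (ultrafilter_space lx) U) V"
      then have V: "openin (ultrafilter_space lx) V" "V \<subseteq> U" using openin_open_subtopology[OF Uo] by auto
      then show "openin (subtopology (ultrafilter_space (\<le>)) (pim ` U)) (pim ` V)"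
        using openin_open_subtopology[OF iUo] open_img[OF V(1)] by auto
    qed
    show "pim ` topspace (subtopology (ultrafilter_space lx) U) = topspace (subtopology (ultrafilter_space (\<le>)) (pim ` U))"
      using tsU tsiU by simp
    show "inj_on pim (topspace (subtopology (ultrafilter_space lx) U))"
      unfolding tsU
    proof (rule inj_onI)
      fix G1 G2 assume a: "G1 \<in> U" "G2 \<in> U" "pim G1 = pim G2"
      then have "is_ultrafilter lx G1" "is_ultrafilter lx G2" "x \<in> G1" "x \<in> G2"
        unfolding U_def by (simp_all add: LL_def)
      then show "G1 = G2" using T3[of G1 G2 x] a(3) by simp
    qed
  qed
  then show "\<exists>U. openin (ultrafilter_space lx) U \<and> G \<in> U \<and> openin (ultrafilter_space (\<le>)) (pim ` U) \<and>
      homeomorphic_map (subtopology (ultrafilter_space lx) U) (subtopology (ultrafilter_space (\<le>)) (pim ` U)) pim"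
    using Uo GU iUo by blast
qed

lemma boolsp: "boolean_space (ultrafilter_space ((\<le>) :: 'b \<Rightarrow> 'b \<Rightarrow> bool))"
  unfolding boolean_space_def
proof (intro conjI allI impI)
  show "Hausdorff_space (ultrafilter_space ((\<le>) :: 'b \<Rightarrow> 'b \<Rightarrow> bool))" by (rule hausdorff)
  fix U F assume a: "openin (ultrafilter_space ((\<le>) :: 'b \<Rightarrow> 'b \<Rightarrow> bool)) U \<and> F \<in> U"
  then obtain c where c: "c \<in> F" "F \<in> LL (\<le>) c" "LL (\<le>) c \<subseteq> U"
    using openin_ufs[of "(\<le>)" U] by blast
  show "\<exists>K. openin (ultrafilter_space (\<le>)) K \<and> compactin (ultrafilter_space (\<le>)) K \<and> F \<in> K \<and> K \<subseteq> U"
  proof (intro exI conjI)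
    show "openin (ultrafilter_space (\<le>)) (LL (\<le>) c)" by (rule openin_LL)
    show "compactin (ultrafilter_space (\<le>)) (LL (\<le>) c)" by (rule compact_LL)
  qed (use c in auto)
qed

end
theorem proposition3p9:
  fixes p :: "'x \<Rightarrow> 'b::{distrib_lattice,order_bot}"
    and r :: "'x \<Rightarrow> 'b \<Rightarrow> 'x"
  assumes "boolean_set p r"
  shows "(\<forall>G. is_ultrafilter (pre_le p r) G \<longrightarrow> is_ultrafilter (\<le>) (p ` G))
       \<and> etale_space (ultrafilter_space (pre_le p r)) (\<lambda>G. p ` G)
                     (ultrafilter_space ((\<le>) :: 'b \<Rightarrow> 'b \<Rightarrow> bool))
       \<and> boolean_space (ultrafilter_space ((\<le>) :: 'b \<Rightarrow> 'b \<Rightarrow> bool))"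
proof -
  interpret bset p r by (rule bset.intro) (rule assms)
  show ?thesis using T1 etale boolsp by blast
qed

end
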